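(* Let $\alpha>0$, let $\mathscr{K}$ be a convex feasible functional, and consider the augmented dual ascent scheme $$x^{n+1} = \operatorname{arg\,min}_{x} \mathscr{K}(x)+\langle x,\Lambda^n\rangle +\frac{\alpha}{2}\|x\|^2,\qquad \Lambda^{n+1} = \Lambda^{n} + \alpha\mathcal{P}_{\mathcal{M}^\perp}(x^{n+1}),\qquad \Lambda^0=0.$$ Define $\mathscr{J}(x)=\mathscr{K}(x)+\frac{\alpha}{2}\|\mathcal{P}_{\mathcal{M}}x\|^2$ and $h(\Lambda)=\min_x \mathscr{J}(x)+\langle x,\mathcal{P}_{\mathcal{M}^\perp}\Lambda\rangle$. Suppose that $(\Lambda^{n})_{n=1}^\infty$ is bounded. Then the set of maximizers of $h$ is non-empty and $(\Lambda^{n})_{n=1}^\infty$ is Fej\'{e}r monotone with respect to it. Moreover, if $c$ is the supremum of $h$ then $c-h(\Lambda^n)=o(1/n)$.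
   Context: $\mathcal{H}$ is a finite dimensional Hilbert space, $\mathcal{M}\subset\mathcal{H}$ a linear subspace, $\mathcal{P}_{\mathcal{M}}$, $\mathcal{P}_{\mathcal{M}^\perp}$ the orthogonal projections onto $\mathcal{M}$, $\mathcal{M}^\perp$. A functional is called feasible if it is lower semi-continuous, proper, bounded below, and satisfies $\lim_{\|x\|\rightarrow\infty}\mathscr{K}(x)/\|x\|=\infty$. *)

theory Defs
  imports "HOL-Analysis.Analysis"
begin

definition orth_proj :: "'a::euclidean_space set \<Rightarrow> 'a \<Rightarrow> 'a" where
  "orth_proj S x = (THE y. y \<in> S \<and> x - y \<in> orthogonal_comp S)"

definition lsc :: "('a::topological_space \<Rightarrow> ereal) \<Rightarrow> bool" where
  "lsc K \<longleftrightarrow> (\<forall>x. K x \<le> Liminf (at x) K)"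

definition proper_fun :: "('a \<Rightarrow> ereal) \<Rightarrow> bool" where
  "proper_fun K \<longleftrightarrow> (\<forall>x. K x \<noteq> -\<infinity>) \<and> (\<exists>x. K x \<noteq> \<infinity>)"

definition bounded_below_fun :: "('a \<Rightarrow> ereal) \<Rightarrow> bool" where
  "bounded_below_fun K \<longleftrightarrow> (\<exists>B::real. \<forall>x. ereal B \<le> K x)"

definition feasible :: "('a::real_normed_vector \<Rightarrow> ereal) \<Rightarrow> bool" where
  "feasible K \<longleftrightarrow> lsc K \<and> proper_fun K \<and> bounded_below_fun K \<and>
     ((\<lambda>x. K x / ereal (norm x)) \<longlongrightarrow> \<infinity>) at_infinity"

definition convex_ereal :: "('a::real_vector \<Rightarrow> ereal) \<Rightarrow> bool" where
  "convex_ereal K \<longleftrightarrow> (\<forall>x y t. 0 < t \<and> t < 1 \<longrightarrow>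
     K (t *\<^sub>R x + (1 - t) *\<^sub>R y) \<le> ereal t * K x + ereal (1 - t) * K y)"

definition fejer_monotone :: "(nat \<Rightarrow> 'a::real_normed_vector) \<Rightarrow> nat \<Rightarrow> 'a set \<Rightarrow> bool" where
  "fejer_monotone L n0 S \<longleftrightarrow>
     (\<forall>z\<in>S. \<forall>n\<ge>n0. norm (L (Suc n) - z) \<le> norm (L n - z))"

end

theory Submission imports Defs begin
lemma orth_proj_char:
  fixes S :: "'a::euclidean_space set"
  assumes "subspace S" "y \<in> S" "x - y \<in> orthogonal_comp S"
  shows "orth_proj S x = y"
  unfolding orth_proj_def
proof (rule the_equality)
  show "y \<in> S \<and> x - y \<in> orthogonal_comp S" using assms by auto
next
  fix y' assume y': "y' \<in> S \<and> x - y' \<in> orthogonal_comp S"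
  have "y - y' \<in> S" using assms y' by (simp add: subspace_diff)
  moreover have "y - y' \<in> orthogonal_comp S"
  proof -
    have "(x - y') - (x - y) \<in> orthogonal_comp S"
      using assms y' subspace_diff[OF subspace_orthogonal_comp] by blast
    then show ?thesis by simp
  qed
  ultimately have "orthogonal (y - y') (y - y')"
    by (auto simp: orthogonal_comp_def)
  then show "y' = y" by (simp add: orthogonal_self)
qed

lemma orth_proj_props:
  fixes S :: "'a::euclidean_space set"
  assumes "subspace S"
  shows "orth_proj S x \<in> S" "x - orth_proj S x \<in> orthogonal_comp S"
proof -
  obtain y z where yz: "y \<in> span S" "\<And>w. w \<in> span S \<Longrightarrow> orthogonal z w" "x = y + z"
    using orthogonal_subspace_decomp_exists by blast
  have sp: "span S = S" using assms by (simp add: span_eq_iff)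
  have "y \<in> S" using yz sp by simp
  moreover have "x - y \<in> orthogonal_comp S"
    using yz sp by (auto simp: orthogonal_comp_def orthogonal_commute)
  ultimately have "orth_proj S x = y" using orth_proj_char assms by blast
  then show "orth_proj S x \<in> S" "x - orth_proj S x \<in> orthogonal_comp S"
    using \<open>y \<in> S\<close> \<open>x - y \<in> orthogonal_comp S\<close> by auto
qed

lemma orth_proj_comp:
  fixes M :: "'a::euclidean_space set"
  assumes "subspace M"
  shows "orth_proj (orthogonal_comp M) v = v - orth_proj M v"
proof (rule orth_proj_char)
  show "subspace (orthogonal_comp M)" by (rule subspace_orthogonal_comp)
  show "v - orth_proj M v \<in> orthogonal_comp M" using orth_proj_props[OF assms] by blast
  have "orth_proj M v \<in> orthogonal_comp (orthogonal_comp M)"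
    using orth_proj_props[OF assms] orthogonal_comp_subset by blast
  then show "v - (v - orth_proj M v) \<in> orthogonal_comp (orthogonal_comp M)" by simp
qed

lemma orth_proj_id:
  fixes M :: "'a::euclidean_space set"
  assumes "L \<in> orthogonal_comp M"
  shows "orth_proj (orthogonal_comp M) L = L"
  by (rule orth_proj_char) (use assms subspace_orthogonal_comp in \<open>auto simp: orthogonal_comp_def orthogonal_def\<close>)

lemma orth_inner0: "a \<in> M \<Longrightarrow> b \<in> orthogonal_comp M \<Longrightarrow> a \<bullet> b = 0"
  by (auto simp: orthogonal_comp_def orthogonal_def)

lemma le_eps_real:
  fixes u v w :: real
  assumes "\<And>t. 0 < t \<Longrightarrow> t < 1 \<Longrightarrow> u \<le> v + t * w" "w \<ge> 0"
  shows "u \<le> v"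
proof (rule ccontr)
  assume "\<not> u \<le> v"
  define t where "t = min (1/2) ((u - v) / (2 * (w + 1)))"
  have t: "0 < t" "t < 1" using \<open>\<not> u \<le> v\<close> assms(2) by (auto simp: t_def)
  have "t * w \<le> ((u - v) / (2 * (w + 1))) * w"
    using assms(2) by (intro mult_right_mono) (auto simp: t_def)
  also have "\<dots> < u - v"
  proof -
    have "0 < (u - v) * (w + 2)" using \<open>\<not> u \<le> v\<close> assms(2) by (intro mult_pos_pos) auto
    then show ?thesis using assms(2) by (simp add: field_simps ring_distribs)
  qed
  finally show False using assms(1)[OF t] by linarith
qed

lemma norm_sq_expand:
  fixes a b :: "'a::real_inner"
  shows "(norm (a + t *\<^sub>R b))\<^sup>2 = (norm a)\<^sup>2 + 2 * t * (a \<bullet> b) + t\<^sup>2 * (norm b)\<^sup>2"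
  unfolding power2_norm_eq_inner by (simp add: inner_add_left inner_add_right inner_commute algebra_simps power2_eq_square)

lemma key_subgrad:
  fixes K :: "'a::real_inner \<Rightarrow> ereal"
  assumes conv: "convex_ereal K" and nm: "\<And>z. K z \<noteq> -\<infinity>" and al: "\<alpha> > 0"
    and mn: "\<And>z. K xx + ereal (xx \<bullet> L + \<alpha> / 2 * (norm xx)\<^sup>2) \<le> K z + ereal (z \<bullet> L + \<alpha> / 2 * (norm z)\<^sup>2)"
    and kx: "K xx = ereal kx" and ky: "K y = ereal ky"
  shows "kx \<le> ky + (y - xx) \<bullet> (L + \<alpha> *\<^sub>R xx)"
proof (rule le_eps_real)
  show "0 \<le> \<alpha> / 2 * (norm (y - xx))\<^sup>2" using al by simp
  fix t :: real assume t: "0 < t" "t < 1"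
  define z where "z = t *\<^sub>R y + (1 - t) *\<^sub>R xx"
  have z: "z = xx + t *\<^sub>R (y - xx)" by (simp add: z_def algebra_simps)
  have "K z \<le> ereal t * K y + ereal (1 - t) * K xx"
    using conv t unfolding convex_ereal_def z_def by blast
  also have "\<dots> = ereal (t * ky + (1 - t) * kx)" by (simp add: kx ky)
  finally have Kz: "K z \<le> ereal (t * ky + (1 - t) * kx)" .
  then obtain kz where kz: "K z = ereal kz" using nm[of z]
    by (cases "K z") auto
  have kz_le: "kz \<le> t * ky + (1 - t) * kx" using Kz kz by simp
  have "kx + (xx \<bullet> L + \<alpha> / 2 * (norm xx)\<^sup>2) \<le> kz + (z \<bullet> L + \<alpha> / 2 * (norm z)\<^sup>2)"
    using mn[of z] kx kz by simp
  also have "(norm z)\<^sup>2 = (norm xx)\<^sup>2 + 2 * t * (xx \<bullet> (y - xx)) + t\<^sup>2 * (norm (y - xx))\<^sup>2"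
    unfolding z by (rule norm_sq_expand)
  also have "z \<bullet> L = xx \<bullet> L + t * ((y - xx) \<bullet> L)" unfolding z by (simp add: inner_add_left)
  finally have "t * kx \<le> t * (ky + (y - xx) \<bullet> (L + \<alpha> *\<^sub>R xx) + t * (\<alpha> / 2 * (norm (y - xx))\<^sup>2))"
    using kz_le by (simp add: algebra_simps inner_add_right inner_commute power2_eq_square)
  then show "kx \<le> ky + (y - xx) \<bullet> (L + \<alpha> *\<^sub>R xx) + t * (\<alpha> / 2 * (norm (y - xx))\<^sup>2)"
    using t by simp
qed

lemma decr_summable_rate:
  fixes e :: "nat \<Rightarrow> real"
  assumes pos: "\<And>n. 0 \<le> e n" and dec: "\<And>n. e (Suc n) \<le> e n" and sm: "summable e"
  shows "(\<lambda>n. real n * e n) \<longlonglongrightarrow> 0"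
proof (rule LIMSEQ_I)
  fix r :: real assume r: "0 < r"
  obtain N where N: "\<And>m n. m \<ge> N \<Longrightarrow> norm (sum e {m..<n}) < r / 2"
    using sm r unfolding summable_Cauchy by (meson half_gt_zero)
  have decs: "decseq e" using dec by (intro decseq_SucI) auto
  show "\<exists>no. \<forall>n\<ge>no. norm (real n * e n - 0) < r"
  proof (intro exI allI impI)
    fix n assume n: "n \<ge> 2 * N"
    have "real (card {n div 2..<n}) * e n \<le> sum e {n div 2..<n}"
      by (rule sum_bounded_below) (use decs in \<open>auto simp: decseq_def\<close>)
    moreover have "real (card {n div 2..<n}) = real n - real (n div 2)" by simp
    moreover have "real n \<le> 2 * (real n - real (n div 2))"
    proof -
      have "2 * (n div 2) \<le> n" by simp
      then have "real (2 * (n div 2)) \<le> real n" by (rule of_nat_mono)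
      then show ?thesis by simp
    qed
    moreover have "norm (sum e {n div 2..<n}) < r / 2" using n by (intro N) auto
    ultimately have c1: "real n * e n \<le> (2 * (real n - real (n div 2))) * e n"
      "2 * (real (card {n div 2..<n}) * e n) < r"
      "2 * (real (card {n div 2..<n}) * e n) = (2 * (real n - real (n div 2))) * e n"
      using pos[of n] mult_right_mono[of "real n" "2 * (real n - real (n div 2))" "e n"] by auto
    then have "real n * e n < r" by linarith
    then show "norm (real n * e n - 0) < r" using pos[of n] by simp
  qed
qed


lemma alg_key:
  fixes a b c d l :: "'a::real_inner"
  assumes z: "a \<bullet> l = 0" "c \<bullet> l = 0" "a \<bullet> b = 0" "a \<bullet> d = 0" "c \<bullet> b = 0"
    and al: "\<alpha> > 0"
    and h: "kx \<le> ky + ((c + d) - (a + b)) \<bullet> (l + \<alpha> *\<^sub>R (a + b))"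
  shows "kx + \<alpha> / 2 * (norm a)\<^sup>2 + (a + b) \<bullet> (l + \<alpha> *\<^sub>R b)
         \<le> ky + \<alpha> / 2 * (norm c)\<^sup>2 + (c + d) \<bullet> (l + \<alpha> *\<^sub>R b)"
proof -
  have z': "b \<bullet> a = 0" "d \<bullet> a = 0" "b \<bullet> c = 0" using z by (simp_all add: inner_commute)
  have e1: "((c + d) - (a + b)) \<bullet> (l + \<alpha> *\<^sub>R (a + b))
      = (d - b) \<bullet> l + \<alpha> * (c \<bullet> a) - \<alpha> * (a \<bullet> a) + \<alpha> * ((d - b) \<bullet> b)"
    using z z' by (simp add: inner_add_left inner_add_right inner_diff_left inner_diff_right algebra_simps)
  have e2: "(a + b) \<bullet> (l + \<alpha> *\<^sub>R b) = b \<bullet> l + \<alpha> * (b \<bullet> b)"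
    using z z' by (simp add: inner_add_left inner_add_right)
  have e3: "(c + d) \<bullet> (l + \<alpha> *\<^sub>R b) = d \<bullet> l + \<alpha> * (d \<bullet> b)"
    using z z' by (simp add: inner_add_left inner_add_right)
  have e4: "(norm (c - a))\<^sup>2 = c \<bullet> c - 2 * (c \<bullet> a) + a \<bullet> a"
    by (simp add: power2_norm_eq_inner inner_diff_left inner_diff_right inner_commute)
  have "0 \<le> \<alpha> / 2 * (norm (c - a))\<^sup>2" using al by simp
  then have "0 \<le> \<alpha> / 2 * (c \<bullet> c) - \<alpha> * (c \<bullet> a) + \<alpha> / 2 * (a \<bullet> a)"
    unfolding e4 by (simp add: algebra_simps)
  moreover have "(d - b) \<bullet> l = d \<bullet> l - b \<bullet> l" "\<alpha> * ((d - b) \<bullet> b) = \<alpha> * (d \<bullet> b) - \<alpha> * (b \<bullet> b)"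
    by (simp_all add: inner_diff_left right_diff_distrib)
  ultimately show ?thesis using h unfolding e1 e2 e3 power2_norm_eq_inner by linarith
qed

lemma norm_step_id:
  fixes l p q :: "'a::real_inner"
  shows "(norm (l - q))\<^sup>2 - (norm (l + \<alpha> *\<^sub>R p - q))\<^sup>2
         = 2 * \<alpha> * (p \<bullet> (q - (l + \<alpha> *\<^sub>R p))) + \<alpha>\<^sup>2 * (norm p)\<^sup>2"
  unfolding power2_norm_eq_inner
  by (simp add: inner_add_left inner_add_right inner_diff_left inner_diff_right inner_commute
      algebra_simps power2_eq_square)

lemma pyth_diff:
  fixes u v :: "'a::real_inner"
  assumes "u \<bullet> v = 0"
  shows "(norm (u - v))\<^sup>2 = (norm u)\<^sup>2 + (norm v)\<^sup>2"
  using assms unfolding power2_norm_eq_inner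
  by (simp add: inner_diff_left inner_diff_right inner_commute)

lemma tele_le:
  fixes f g :: "nat \<Rightarrow> real"
  assumes "\<And>n. f n \<le> g n - g (Suc n)"
  shows "(\<Sum>n<N. f n) \<le> g 0 - g N"
proof (induction N)
  case (Suc N) then show ?case using assms[of N] by simp
qed simp

theorem corollary2:
  fixes K :: "'a::euclidean_space \<Rightarrow> ereal"
    and M :: "'a set"
    and \<alpha> :: real
    and x \<Lambda> :: "nat \<Rightarrow> 'a"
    and J h :: "'a \<Rightarrow> ereal"
  assumes "subspace M"
    and "\<alpha> > 0"
    and "convex_ereal K" and "feasible K"
    and "\<Lambda> 0 = 0"
    and "\<And>n y. K (x (Suc n)) + ereal (x (Suc n) \<bullet> \<Lambda> n + \<alpha> / 2 * (norm (x (Suc n)))\<^sup>2)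
                 \<le> K y + ereal (y \<bullet> \<Lambda> n + \<alpha> / 2 * (norm y)\<^sup>2)"
    and "\<And>n. \<Lambda> (Suc n) = \<Lambda> n + \<alpha> *\<^sub>R orth_proj (orthogonal_comp M) (x (Suc n))"
    and "\<And>y. J y = K y + ereal (\<alpha> / 2 * (norm (orth_proj M y))\<^sup>2)"
    and "\<And>L. h L = (INF y. J y + ereal (y \<bullet> orth_proj (orthogonal_comp M) L))"
    and "bounded {\<Lambda> n | n. n \<ge> 1}"
  shows "{L. \<forall>L'. h L' \<le> h L} \<noteq> {}
         \<and> fejer_monotone \<Lambda> 1 {L. \<forall>L'. h L' \<le> h L}
         \<and> ((\<lambda>n. ereal (real n) * ((SUP L. h L) - h (\<Lambda> n))) \<longlongrightarrow> 0) sequentially"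
proof -
  define P where "P = orth_proj (orthogonal_comp M)"
  define Q where "Q = orth_proj M"
  have sM: "subspace M" and al: "\<alpha> > 0" using assms by auto
  have sMc: "subspace (orthogonal_comp M)" by (rule subspace_orthogonal_comp)
  have QM: "\<And>v. Q v \<in> M" and Pdec: "\<And>v. P v = v - Q v" 
    using orth_proj_props[OF sM] orth_proj_comp[OF sM] by (auto simp: P_def Q_def)
  have PM: "\<And>v. P v \<in> orthogonal_comp M" using orth_proj_props[OF sM] Pdec by (auto simp: Q_def)
  have dec: "\<And>v. v = Q v + P v" using Pdec by simp
  have Pid: "\<And>L. L \<in> orthogonal_comp M \<Longrightarrow> P L = L" by (simp add: P_def orth_proj_id)
  have oi: "\<And>a b. a \<in> M \<Longrightarrow> b \<in> orthogonal_comp M \<Longrightarrow> a \<bullet> b = 0" by (rule orth_inner0)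
  have oi': "\<And>a b. a \<in> M \<Longrightarrow> b \<in> orthogonal_comp M \<Longrightarrow> b \<bullet> a = 0"
    using oi inner_commute by metis
  have LamS: "\<And>n. \<Lambda> (Suc n) = \<Lambda> n + \<alpha> *\<^sub>R P (x (Suc n))" using assms(7) P_def by simp
  have LamM: "\<Lambda> n \<in> orthogonal_comp M" for n
  proof (induction n)
    case 0 show ?case using assms(5) subspace_0[OF sMc] by simp
  next
    case (Suc n) show ?case unfolding LamS
      using Suc PM subspace_add[OF sMc] subspace_scale[OF sMc] by blast
  qed
  have Jdef: "\<And>y. J y = K y + ereal (\<alpha>/2 * (norm (Q y))\<^sup>2)" using assms(8) Q_def by simp
  have hdef: "\<And>L. h L = (INF y. J y + ereal (y \<bullet> P L))" using assms(9) P_def by simp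
  have nm: "\<And>z. K z \<noteq> -\<infinity>" and ex: "\<exists>x0. K x0 \<noteq> \<infinity>"
    using assms(4) by (auto simp: feasible_def proper_fun_def)
  note mn = assms(6)
  obtain x0 where x0: "K x0 \<noteq> \<infinity>" using ex by blast
  have Kfin: "K (x (Suc n)) = ereal (real_of_ereal (K (x (Suc n))))" for n
  proof -
    have "K (x (Suc n)) + ereal (x (Suc n) \<bullet> \<Lambda> n + \<alpha> / 2 * (norm (x (Suc n)))\<^sup>2)
                 \<le> K x0 + ereal (x0 \<bullet> \<Lambda> n + \<alpha> / 2 * (norm x0)\<^sup>2)" by (rule mn)
    then have "K (x (Suc n)) \<noteq> \<infinity>" using x0 nm[of x0] by (cases "K x0") auto
    then show ?thesis using nm[of "x (Suc n)"] by (cases "K (x (Suc n))") auto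
  qed
  define kx where "kx n = real_of_ereal (K (x (Suc n)))" for n
  define p where "p n = P (x (Suc n))" for n
  define A where "A n = kx n + \<alpha>/2 * (norm (Q (x (Suc n))))\<^sup>2 + x (Suc n) \<bullet> \<Lambda> (Suc n)" for n
  have Kx: "K (x (Suc n)) = ereal (kx n)" for n using Kfin kx_def by simp
  have LamS': "\<Lambda> (Suc n) = \<Lambda> n + \<alpha> *\<^sub>R p n" for n using LamS p_def by simp
  \<comment> \<open>key: x(n+1) minimizes the Lagrangian at Lambda(n+1)\<close>
  have KEY2: "ereal (A n) \<le> J y + ereal (y \<bullet> \<Lambda> (Suc n))" for n y
  proof (cases "K y")
    case (real ky)
    have sg: "kx n \<le> ky + (y - x (Suc n)) \<bullet> (\<Lambda> n + \<alpha> *\<^sub>R x (Suc n))"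
      by (rule key_subgrad[OF assms(3) nm al mn Kx real])
    let ?a = "Q (x (Suc n))" and ?b = "P (x (Suc n))" and ?c = "Q y" and ?d = "P y"
    have "kx n + \<alpha> / 2 * (norm ?a)\<^sup>2 + (?a + ?b) \<bullet> (\<Lambda> n + \<alpha> *\<^sub>R ?b)
         \<le> ky + \<alpha> / 2 * (norm ?c)\<^sup>2 + (?c + ?d) \<bullet> (\<Lambda> n + \<alpha> *\<^sub>R ?b)"
      by (rule alg_key) (use sg dec[of y] dec[of "x (Suc n)"] QM PM LamM oi al in \<open>auto\<close>)
    then have "A n \<le> ky + \<alpha> / 2 * (norm (Q y))\<^sup>2 + y \<bullet> \<Lambda> (Suc n)"
      unfolding A_def LamS using dec[of y] dec[of "x (Suc n)"] by simp
    then show ?thesis using real Jdef[of y] by simp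
  next
    case PInf then show ?thesis using Jdef[of y] by simp
  next
    case MInf then show ?thesis using nm by simp
  qed
  have hA: "h (\<Lambda> (Suc n)) = ereal (A n)" for n
  proof -
    have e: "J (x (Suc n)) + ereal (x (Suc n) \<bullet> \<Lambda> (Suc n)) = ereal (A n)"
      using Jdef Kx A_def by simp
    show ?thesis unfolding hdef Pid[OF LamM]
    proof (rule antisym)
      show "(INF y. J y + ereal (y \<bullet> \<Lambda> (Suc n))) \<le> ereal (A n)"
        by (rule INF_lower2[of "x (Suc n)"]) (use e in auto)
      show "ereal (A n) \<le> (INF y. J y + ereal (y \<bullet> \<Lambda> (Suc n)))"
        by (rule INF_greatest) (rule KEY2)
    qed
  qed
  have HA: "h L \<le> ereal (A n + p n \<bullet> (P L - \<Lambda> (Suc n)))" for n L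
  proof -
    have "h L \<le> J (x (Suc n)) + ereal (x (Suc n) \<bullet> P L)"
      unfolding hdef by (rule INF_lower) simp
    also have "\<dots> = ereal (kx n + \<alpha>/2 * (norm (Q (x (Suc n))))\<^sup>2 + x (Suc n) \<bullet> P L)"
      using Jdef Kx by simp
    also have "x (Suc n) \<bullet> P L = x (Suc n) \<bullet> \<Lambda> (Suc n) + p n \<bullet> (P L - \<Lambda> (Suc n))"
    proof -
      have w: "P L - \<Lambda> (Suc n) \<in> orthogonal_comp M" using PM LamM subspace_diff[OF sMc] by blast
      have "x (Suc n) \<bullet> (P L - \<Lambda> (Suc n)) = p n \<bullet> (P L - \<Lambda> (Suc n))"
        using dec[of "x (Suc n)"] oi[OF QM w] p_def by (metis add.left_neutral inner_add_left)
      then show ?thesis by (simp add: inner_diff_right)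
    qed
    finally show ?thesis by (simp add: A_def add.assoc)
  qed
  have Ainc: "A n \<le> A (Suc n)" for n
  proof -
    have "ereal (A n) \<le> ereal (A (Suc n) + p (Suc n) \<bullet> (P (\<Lambda> (Suc n)) - \<Lambda> (Suc (Suc n))))"
      using HA[of "\<Lambda> (Suc n)" "Suc n"] hA[of n] by simp
    moreover have "p (Suc n) \<bullet> (P (\<Lambda> (Suc n)) - \<Lambda> (Suc (Suc n))) = - \<alpha> * (p (Suc n) \<bullet> p (Suc n))"
      using Pid[OF LamM] LamS'[of "Suc n"] by simp
    moreover have "0 \<le> \<alpha> * (p (Suc n) \<bullet> p (Suc n))" using al by simp
    ultimately show ?thesis by simp
  qed
  have HC: "2 * \<alpha> * (r - A n) \<le> (norm (\<Lambda> n - P L))\<^sup>2 - (norm (\<Lambda> (Suc n) - P L))\<^sup>2"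
    if "ereal r \<le> h L" for n L r
  proof -
    have "r \<le> A n + p n \<bullet> (P L - \<Lambda> (Suc n))" using order_trans[OF that HA[of L n]] by simp
    moreover have "(norm (\<Lambda> n - P L))\<^sup>2 - (norm (\<Lambda> n + \<alpha> *\<^sub>R p n - P L))\<^sup>2
         = 2 * \<alpha> * (p n \<bullet> (P L - (\<Lambda> n + \<alpha> *\<^sub>R p n))) + \<alpha>\<^sup>2 * (norm (p n))\<^sup>2"
      by (rule norm_step_id)
    moreover have "0 \<le> \<alpha>\<^sup>2 * (norm (p n))\<^sup>2" by simp
    ultimately have "2 * \<alpha> * (r - A n) \<le> 2 * \<alpha> * (p n \<bullet> (P L - \<Lambda> (Suc n)))"
      using al by (intro mult_left_mono) auto
    with \<open>_ = 2 * \<alpha> * _ + _\<close> \<open>0 \<le> \<alpha>\<^sup>2 * _\<close> show ?thesis unfolding LamS' by linarith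
  qed
  obtain B where B: "\<And>n. norm (\<Lambda> (Suc n)) \<le> B"
    using assms(10) unfolding bounded_iff by force
  have Abd: "A n \<le> A 0 + norm (p 0) * (2 * B)" for n
  proof -
    have "ereal (A n) \<le> ereal (A 0 + p 0 \<bullet> (P (\<Lambda> (Suc n)) - \<Lambda> (Suc 0)))"
      using HA[of "\<Lambda> (Suc n)" 0] hA[of n] by simp
    then have "A n \<le> A 0 + p 0 \<bullet> (\<Lambda> (Suc n) - \<Lambda> (Suc 0))" using Pid[OF LamM] by simp
    also have "p 0 \<bullet> (\<Lambda> (Suc n) - \<Lambda> (Suc 0)) \<le> norm (p 0) * norm (\<Lambda> (Suc n) - \<Lambda> (Suc 0))"
      by (rule norm_cauchy_schwarz)
    also have "norm (\<Lambda> (Suc n) - \<Lambda> (Suc 0)) \<le> 2 * B"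
      using B[of n] B[of 0] norm_triangle_ineq4[of "\<Lambda> (Suc n)" "\<Lambda> (Suc 0)"] by linarith
    then have "norm (p 0) * norm (\<Lambda> (Suc n) - \<Lambda> (Suc 0)) \<le> norm (p 0) * (2 * B)"
      by (rule mult_left_mono) simp
    finally show ?thesis by simp
  qed
  have bdd: "bdd_above (range A)" by (rule bdd_aboveI2[where M = "A 0 + norm (p 0) * (2 * B)"]) (rule Abd)
  have incA: "incseq A" using Ainc by (rule incseq_SucI)
  define c where "c = (SUP i. A i)"
  have Alim: "A \<longlonglongrightarrow> c" unfolding c_def by (rule LIMSEQ_incseq_SUP[OF bdd incA])
  have Ac: "A n \<le> c" for n unfolding c_def using bdd by (simp add: cSUP_upper)
  have hle: "h L \<le> ereal c" for L
  proof (cases "h L")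
    case PInf then show ?thesis using HA[of L 0] by simp
  next
    case MInf then show ?thesis by simp
  next
    case (real r)
    have tl: "(\<Sum>n<N. 2 * \<alpha> * (r - A n)) \<le> (norm (\<Lambda> 0 - P L))\<^sup>2 - (norm (\<Lambda> N - P L))\<^sup>2" for N
      by (rule tele_le[where g = "\<lambda>n. (norm (\<Lambda> n - P L))\<^sup>2"]) (use HC real in auto)
    have bnd: "real N * (2 * \<alpha> * (r - c)) \<le> (norm (P L))\<^sup>2" for N
    proof -
      have "real N * (2 * \<alpha> * (r - c)) = (\<Sum>n<N. 2 * \<alpha> * (r - c))" by simp
      also have "\<dots> \<le> (\<Sum>n<N. 2 * \<alpha> * (r - A n))"
        by (rule sum_mono) (use al Ac in auto)
      also have "\<dots> \<le> (norm (P L))\<^sup>2"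
      proof -
        have "(\<Sum>n<N. 2 * \<alpha> * (r - A n)) \<le> (norm (P L))\<^sup>2 - (norm (\<Lambda> N - P L))\<^sup>2"
          using tl[of N] assms(5) by simp
        then show ?thesis using zero_le_power2[of "norm (\<Lambda> N - P L)"] by linarith
      qed
      finally show ?thesis .
    qed
    have "r \<le> c"
    proof (rule ccontr)
      assume "\<not> r \<le> c"
      then have pos: "0 < 2 * \<alpha> * (r - c)" using al by simp
      obtain N where N: "(norm (P L))\<^sup>2 / (2 * \<alpha> * (r - c)) < real N"
        using reals_Archimedean2 by blast
      then have "(norm (P L))\<^sup>2 < real N * (2 * \<alpha> * (r - c))"
        using pos by (simp add: field_simps)
      then show False using bnd[of N] by simp
    qed
    then show ?thesis using real by simp
  qed
  have bR: "bounded (range (\<lambda>n. \<Lambda> (Suc n)))"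
    using B unfolding bounded_iff by blast
  obtain l s where s: "strict_mono s" and ls: "((\<lambda>n. \<Lambda> (Suc n)) \<circ> s) \<longlonglongrightarrow> l"
    using bounded_imp_convergent_subsequence[OF bR] by blast
  have lM: "l \<in> orthogonal_comp M"
    by (rule closed_sequentially[OF closed_subspace[OF sMc] _ ls]) (simp add: LamM)
  have hl: "ereal c \<le> h l"
    unfolding hdef Pid[OF lM]
  proof (rule INF_greatest)
    fix y
    show "ereal c \<le> J y + ereal (y \<bullet> l)"
    proof (cases "J y")
      case PInf then show ?thesis by simp
    next
      case MInf then show ?thesis using Jdef[of y] nm[of y] by simp
    next
      case (real j)
      have le: "A n \<le> j + y \<bullet> \<Lambda> (Suc n)" for n using KEY2[of n y] real by simp
      have "c \<le> j + y \<bullet> l"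
      proof (rule LIMSEQ_le)
        show "(A \<circ> s) \<longlonglongrightarrow> c" by (rule LIMSEQ_subseq_LIMSEQ[OF Alim s])
        show "(\<lambda>k. j + y \<bullet> ((\<lambda>n. \<Lambda> (Suc n)) \<circ> s) k) \<longlonglongrightarrow> j + y \<bullet> l"
          by (intro tendsto_intros ls)
        show "\<exists>N. \<forall>n\<ge>N. (A \<circ> s) n \<le> j + y \<bullet> ((\<lambda>n. \<Lambda> (Suc n)) \<circ> s) n"
          using le by simp
      qed
      then show ?thesis using real by simp
    qed
  qed
  have hl_eq: "h l = ereal c" using hl hle[of l] by simp
  have maxl: "\<forall>L'. h L' \<le> h l" using hle hl by (metis order_trans)
  have SUPc: "(SUP L. h L) = ereal c"
    by (rule antisym) (auto intro: SUP_least hle SUP_upper2[of l] simp: hl_eq)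
  have part1: "{L. \<forall>L'. h L' \<le> h L} \<noteq> {}" using maxl by blast
  have part2: "fejer_monotone \<Lambda> 1 {L. \<forall>L'. h L' \<le> h L}"
    unfolding fejer_monotone_def
  proof (intro ballI allI impI)
    fix z n assume z: "z \<in> {L. \<forall>L'. h L' \<le> h L}"
    have "ereal (A n) \<le> h z" using z hA[of n] by (metis mem_Collect_eq)
    then have "A n \<le> A n + p n \<bullet> (P z - \<Lambda> (Suc n))" using HA[of z n] by (metis ereal_less_eq(3) order_trans)
    then have nn: "0 \<le> p n \<bullet> (P z - \<Lambda> (Suc n))" by simp
    have "(norm (\<Lambda> n - P z))\<^sup>2 - (norm (\<Lambda> n + \<alpha> *\<^sub>R p n - P z))\<^sup>2
         = 2 * \<alpha> * (p n \<bullet> (P z - (\<Lambda> n + \<alpha> *\<^sub>R p n))) + \<alpha>\<^sup>2 * (norm (p n))\<^sup>2"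
      by (rule norm_step_id)
    then have sq: "(norm (\<Lambda> (Suc n) - P z))\<^sup>2 \<le> (norm (\<Lambda> n - P z))\<^sup>2"
    proof -
      have "0 \<le> 2 * \<alpha> * (p n \<bullet> (P z - \<Lambda> (Suc n)))" using nn al by simp
      moreover have "0 \<le> \<alpha>\<^sup>2 * (norm (p n))\<^sup>2" by simp
      ultimately show ?thesis using \<open>_ = 2 * \<alpha> * _ + _\<close> unfolding LamS' by linarith
    qed
    have py: "(norm (\<Lambda> m - z))\<^sup>2 = (norm (\<Lambda> m - P z))\<^sup>2 + (norm (Q z))\<^sup>2" for m
    proof -
      have eq: "\<Lambda> m - z = (\<Lambda> m - P z) - Q z" using dec[of z] by (metis diff_diff_eq add.commute)
      have "(\<Lambda> m - P z) \<bullet> Q z = 0"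
        using oi'[OF QM] LamM PM subspace_diff[OF sMc] by blast
      from pyth_diff[OF this] show ?thesis unfolding eq .
    qed
    have "(norm (\<Lambda> (Suc n) - z))\<^sup>2 \<le> (norm (\<Lambda> n - z))\<^sup>2" using sq py by simp
    then show "norm (\<Lambda> (Suc n) - z) \<le> norm (\<Lambda> n - z)"
      by (rule power2_le_imp_le) simp
  qed
  define e where "e n = c - A n" for n
  have epos: "0 \<le> e n" for n using Ac by (simp add: e_def)
  have edec: "e (Suc n) \<le> e n" for n using Ainc by (simp add: e_def)
  have etl: "(\<Sum>n<N. 2 * \<alpha> * e n) \<le> (norm (\<Lambda> 0 - l))\<^sup>2 - (norm (\<Lambda> N - l))\<^sup>2" for N
    by (rule tele_le[where g = "\<lambda>n. (norm (\<Lambda> n - l))\<^sup>2"])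
      (use HC[of c l] hl Pid[OF lM] in \<open>auto simp: e_def\<close>)
  have "(\<Sum>n<N. e n) \<le> (norm l)\<^sup>2 / (2 * \<alpha>)" for N
  proof -
    have "(\<Sum>n<N. 2 * \<alpha> * e n) = 2 * \<alpha> * (\<Sum>n<N. e n)" by (simp add: sum_distrib_left)
    moreover have "(\<Sum>n<N. 2 * \<alpha> * e n) \<le> (norm l)\<^sup>2 - (norm (\<Lambda> N - l))\<^sup>2"
      using etl[of N] assms(5) by simp
    ultimately have "2 * \<alpha> * (\<Sum>n<N. e n) \<le> (norm l)\<^sup>2"
      using zero_le_power2[of "norm (\<Lambda> N - l)"] by linarith
    then show ?thesis using al by (simp add: field_simps)
  qed
  then have esum: "summable e" by (rule summableI_nonneg_bounded[OF epos])
  have r1: "(\<lambda>n. real n * e n) \<longlonglongrightarrow> 0" by (rule decr_summable_rate[OF epos edec esum])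
  have r2: "e \<longlonglongrightarrow> 0" by (rule summable_LIMSEQ_zero[OF esum])
  have r3: "(\<lambda>n. real (Suc n) * e n) \<longlonglongrightarrow> 0"
    using tendsto_add[OF r1 r2] by (simp add: algebra_simps)
  have part3: "((\<lambda>n. ereal (real n) * ((SUP L. h L) - h (\<Lambda> n))) \<longlongrightarrow> 0) sequentially"
  proof (subst filterlim_sequentially_Suc[symmetric])
    have "(\<lambda>n. ereal (real (Suc n)) * ((SUP L. h L) - h (\<Lambda> (Suc n)))) = (\<lambda>n. ereal (real (Suc n) * e n))"
      by (simp add: SUPc hA e_def)
    moreover have "((\<lambda>n. ereal (real (Suc n) * e n)) \<longlongrightarrow> 0) sequentially"
      using r3 by (simp add: zero_ereal_def)
    ultimately show "((\<lambda>n. ereal (real (Suc n)) * ((SUP L. h L) - h (\<Lambda> (Suc n)))) \<longlongrightarrow> 0) sequentially"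
      by simp
  qed
  show ?thesis using part1 part2 part3 by blast
qed

end
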